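(* Let $\mathcal{F}:\mathcal{T}^Y\to\mathcal{T}^Z$ be a cover between trees of spheres, let $v$ be a vertex of $T^Z$ and $e\in E_v$ an edge of $T^Z$ containing $v$. Then $D_e=D_v$, where $D_v:=\sum_{v'\in F^{-1}(v)}\deg(v')$ and $D_e:=\sum_{e'\in F^{-1}(e)}\deg(e')$.
   Context: Trees are finite connected graphs without cycles (vertex set $V$, edges $2$-element subsets of $V$, $E_v$ the set of edges containing $v$); leaves are vertices of valence $1$, the others are internal vertices ($IV$). A tree marked by a finite set $X$ ($\ge3$ elements) is a tree whose set of leaves is $X$. A tree of spheres $\mathcal{T}^X$ consists of a tree $T^X$ marked by $X$ and, for each internal vertex $v$, a topological $2$-sphere $\mathcal{S}_v$ and an injection $i_v:E_v\to\mathcal{S}_v$; $X_v:=i_v(E_v)$. A cover $\mathcal{F}:\mathcal{T}^Y\to\mathcal{T}^Z$ consists of a map $F:T^Y\to T^Z$ sending vertices to vertices and each edge $\{v,w\}$ to the edge $\{F(v),F(w)\}$, with $F(Y)\subseteq Z$ and $F(IV^Y)\subseteq IV^Z$, and for each $v\in IV^Y$, $w=F(v)$, a topological branched covering $f_v:\mathcal{S}_v\to\mathcal{S}_w$ such that (a) $f_v:\mathcal{S}_v\setminus Y_v\to\mathcal{S}_w\setminus Z_w$ is a covering map, (b) $f_v\circ i_v=i_w\circ F$ on $E_v$, (c) for an edge $e=\{v_1,v_2\}$ between internal vertices, $\deg_{i_{v_1}(e)}f_{v_1}=\deg_{i_{v_2}(e)}f_{v_2}$. Degrees: $\deg(v)=\deg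 f_v$ for internal $v$; for an edge $e$ with an internal endpoint $v$, $\deg(e)=\deg_{i_v(e)}f_v$ (well defined by (c)); for a leaf $y$ with its edge $e$, $\deg(y)=\deg(e)$. *)

theory Defs
  imports "HOL-Analysis.Analysis"
begin

definition walk :: "'v set set \<Rightarrow> 'v list \<Rightarrow> bool" where
  "walk E xs \<longleftrightarrow> xs \<noteq> [] \<and> (\<forall>k. Suc k < length xs \<longrightarrow> {xs ! k, xs ! Suc k} \<in> E)"

definition graph_connected :: "'v set \<Rightarrow> 'v set set \<Rightarrow> bool" where
  "graph_connected V E \<longleftrightarrow>
     (\<forall>u\<in>V. \<forall>w\<in>V. \<exists>xs. walk E xs \<and> set xs \<subseteq> V \<and> hd xs = u \<and> last xs = w)"

definition has_cycle :: "'v set set \<Rightarrow> bool" where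
  "has_cycle E \<longleftrightarrow>
     (\<exists>xs. 3 \<le> length xs \<and> distinct xs \<and> walk E xs \<and> {last xs, hd xs} \<in> E)"

definition is_tree :: "'v set \<Rightarrow> 'v set set \<Rightarrow> bool" where
  "is_tree V E \<longleftrightarrow> finite V \<and> V \<noteq> {} \<and>
     (\<forall>e\<in>E. e \<subseteq> V \<and> card e = 2) \<and> graph_connected V E \<and> \<not> has_cycle E"

definition edges_at :: "'v set set \<Rightarrow> 'v \<Rightarrow> 'v set set" where
  "edges_at E v = {e\<in>E. v \<in> e}"

definition valence :: "'v set set \<Rightarrow> 'v \<Rightarrow> nat" where
  "valence E v = card (edges_at E v)"

definition leaves :: "'v set \<Rightarrow> 'v set set \<Rightarrow> 'v set" where
  "leaves V E = {v\<in>V. valence E v = 1}"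

definition internal_vertices :: "'v set \<Rightarrow> 'v set set \<Rightarrow> 'v set" where
  "internal_vertices V E = V - leaves V E"

definition marked_tree :: "'v set \<Rightarrow> 'v set set \<Rightarrow> 'v set \<Rightarrow> bool" where
  "marked_tree V E X \<longleftrightarrow> is_tree V E \<and> leaves V E = X \<and> finite X \<and> 3 \<le> card X"

text \<open>Spheres are realised as subsets (with the subspace topology) of an arbitrary
  topological space type; a topological 2-sphere is a set homeomorphic to the unit
  sphere of \<open>\<real>\<^sup>3\<close>.\<close>

definition topological_2sphere :: "'a::topological_space set \<Rightarrow> bool" where
  "topological_2sphere S \<longleftrightarrow> S homeomorphic (sphere (0::real^3) 1)"

definition tree_of_spheres ::
  "'v set \<Rightarrow> 'v set set \<Rightarrow> 'v set \<Rightarrow> ('v \<Rightarrow> 'a::topological_space set) \<Rightarrow> ('v \<Rightarrow> 'v set \<Rightarrow> 'a) \<Rightarrow> bool" where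
  "tree_of_spheres V E X S i \<longleftrightarrow> marked_tree V E X \<and>
     (\<forall>v\<in>internal_vertices V E.
        topological_2sphere (S v) \<and> inj_on (i v) (edges_at E v) \<and> i v ` edges_at E v \<subseteq> S v)"

definition marked_points :: "'v set set \<Rightarrow> ('v \<Rightarrow> 'v set \<Rightarrow> 'a) \<Rightarrow> 'v \<Rightarrow> 'a set" where
  "marked_points E i v = i v ` edges_at E v"

definition local_model ::
  "('a::topological_space \<Rightarrow> 'b::topological_space) \<Rightarrow> 'a set \<Rightarrow> 'b set \<Rightarrow> 'a \<Rightarrow> nat \<Rightarrow> bool" where
  "local_model f S T p d \<longleftrightarrow> 1 \<le> d \<and>
     (\<exists>U W \<phi> \<phi>' \<psi> \<psi>'. openin (top_of_set S) U \<and> p \<in> U \<and> openin (top_of_set T) W \<and>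
        f ` U = W \<and>
        homeomorphism U (ball (0::complex) 1) \<phi> \<phi>' \<and>
        homeomorphism W (ball (0::complex) 1) \<psi> \<psi>' \<and>
        \<phi> p = 0 \<and> \<psi> (f p) = 0 \<and>
        (\<forall>z\<in>ball 0 1. \<psi> (f (\<phi>' z)) = z ^ d))"

definition branched_covering ::
  "('a::topological_space \<Rightarrow> 'b::topological_space) \<Rightarrow> 'a set \<Rightarrow> 'b set \<Rightarrow> bool" where
  "branched_covering f S T \<longleftrightarrow> continuous_on S f \<and> f ` S = T \<and>
     (\<forall>p\<in>S. \<exists>d. local_model f S T p d)"

definition local_degree ::
  "('a::topological_space \<Rightarrow> 'b::topological_space) \<Rightarrow> 'a set \<Rightarrow> 'b set \<Rightarrow> 'a \<Rightarrow> nat" where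
  "local_degree f S T p = (THE d. local_model f S T p d)"

definition critical_value ::
  "('a::topological_space \<Rightarrow> 'b::topological_space) \<Rightarrow> 'a set \<Rightarrow> 'b set \<Rightarrow> 'b \<Rightarrow> bool" where
  "critical_value f S T q \<longleftrightarrow> (\<exists>p\<in>S. f p = q \<and> local_degree f S T p \<noteq> 1)"

definition bc_degree ::
  "('a::topological_space \<Rightarrow> 'b::topological_space) \<Rightarrow> 'a set \<Rightarrow> 'b set \<Rightarrow> nat" where
  "bc_degree f S T =
     card (S \<inter> f -` {SOME q. q \<in> T \<and> \<not> critical_value f S T q})"

definition tree_cover ::
  "'v set \<Rightarrow> 'v set set \<Rightarrow> 'v set \<Rightarrow> ('v \<Rightarrow> 'a::topological_space set) \<Rightarrow> ('v \<Rightarrow> 'v set \<Rightarrow> 'a) \<Rightarrow>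
   'w set \<Rightarrow> 'w set set \<Rightarrow> 'w set \<Rightarrow> ('w \<Rightarrow> 'b::topological_space set) \<Rightarrow> ('w \<Rightarrow> 'w set \<Rightarrow> 'b) \<Rightarrow>
   ('v \<Rightarrow> 'w) \<Rightarrow> ('v \<Rightarrow> 'a \<Rightarrow> 'b) \<Rightarrow> bool" where
  "tree_cover VY EY Y SY iY VZ EZ Z SZ iZ F f \<longleftrightarrow>
     tree_of_spheres VY EY Y SY iY \<and> tree_of_spheres VZ EZ Z SZ iZ \<and>
     F ` VY \<subseteq> VZ \<and>
     (\<forall>e\<in>EY. F ` e \<in> EZ) \<and>
     F ` Y \<subseteq> Z \<and>
     F ` internal_vertices VY EY \<subseteq> internal_vertices VZ EZ \<and>
     (\<forall>v\<in>internal_vertices VY EY.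
        branched_covering (f v) (SY v) (SZ (F v)) \<and>
        covering_space (SY v - marked_points EY iY v) (f v)
                       (SZ (F v) - marked_points EZ iZ (F v)) \<and>
        (\<forall>e\<in>edges_at EY v. f v (iY v e) = iZ (F v) (F ` e))) \<and>
     (\<forall>e\<in>EY. \<forall>v1\<in>internal_vertices VY EY. \<forall>v2\<in>internal_vertices VY EY.
        e = {v1, v2} \<longrightarrow>
        local_degree (f v1) (SY v1) (SZ (F v1)) (iY v1 e) =
        local_degree (f v2) (SY v2) (SZ (F v2)) (iY v2 e))"

definition edge_degree ::
  "'v set \<Rightarrow> 'v set set \<Rightarrow> ('v \<Rightarrow> 'a::topological_space set) \<Rightarrow> ('v \<Rightarrow> 'v set \<Rightarrow> 'a) \<Rightarrow>
   ('w \<Rightarrow> 'b::topological_space set) \<Rightarrow> ('v \<Rightarrow> 'w) \<Rightarrow> ('v \<Rightarrow> 'a \<Rightarrow> 'b) \<Rightarrow> 'v set \<Rightarrow> nat" where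
  "edge_degree VY EY SY iY SZ F f e =
     (let v = (SOME v. v \<in> e \<and> v \<in> internal_vertices VY EY)
      in local_degree (f v) (SY v) (SZ (F v)) (iY v e))"

definition vertex_degree ::
  "'v set \<Rightarrow> 'v set set \<Rightarrow> ('v \<Rightarrow> 'a::topological_space set) \<Rightarrow> ('v \<Rightarrow> 'v set \<Rightarrow> 'a) \<Rightarrow>
   ('w \<Rightarrow> 'b::topological_space set) \<Rightarrow> ('v \<Rightarrow> 'w) \<Rightarrow> ('v \<Rightarrow> 'a \<Rightarrow> 'b) \<Rightarrow> 'v \<Rightarrow> nat" where
  "vertex_degree VY EY SY iY SZ F f v =
     (if v \<in> internal_vertices VY EY then bc_degree (f v) (SY v) (SZ (F v))
      else edge_degree VY EY SY iY SZ F f (THE e. e \<in> edges_at EY v))"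

end

theory Submission
  imports Defs
begin

lemma roots_small:
  fixes z w :: complex
  assumes "z ^ d = w" "norm w < r ^ d" "d \<ge> 1" "r > 0"
  shows "norm z < r"
proof (rule ccontr)
  assume "\<not> norm z < r"
  then have "r ^ d \<le> norm z ^ d" using assms(4) by (intro power_mono) auto
  moreover have "norm w = norm z ^ d" using assms(1) norm_power[of z d] by simp
  ultimately show False using assms(2) by linarith
qed

lemma local_count_raw:
  assumes d: "1 \<le> d" and U: "openin (top_of_set S) U" "p \<in> U"
    and W: "openin (top_of_set T) W" and fU: "f ` U = W"
    and h1: "homeomorphism U (ball (0::complex) 1) \<phi> \<phi>'"
    and h2: "homeomorphism W (ball (0::complex) 1) \<psi> \<psi>'"
    and p0: "\<phi> p = 0" and fp0: "\<psi> (f p) = 0"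
    and eq: "\<forall>z\<in>ball 0 1. \<psi> (f (\<phi>' z)) = z ^ d"
    and V: "openin (top_of_set S) V" "p \<in> V"
  shows "\<exists>G. openin (top_of_set T) G \<and> f p \<in> G \<and>
     (\<forall>q\<in>G. q \<noteq> f p \<longrightarrow> {x\<in>U. f x = q} \<subseteq> V \<and> card {x\<in>U. f x = q} = d) \<and>
     {x\<in>U. f x = f p} = {p}"
proof -
  have "openin (top_of_set U) (U \<inter> V)"
    using V(1) U(1) by (meson inf_le1 openin_Int openin_imp_subset openin_subset_trans)
  then have "openin (top_of_set (ball 0 1)) (\<phi> ` (U \<inter> V))"
    using homeomorphism_imp_open_map[OF h1] by blast
  then have op: "open (\<phi> ` (U \<inter> V))" using openin_open_trans by blast
  have "0 \<in> \<phi> ` (U \<inter> V)" using p0 U V by (metis IntI image_eqI)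
  then obtain r0 where r0: "r0 > 0" "ball 0 r0 \<subseteq> \<phi> ` (U \<inter> V)"
    using op open_contains_ball by blast
  define r where "r = min r0 1"
  have r: "r > 0" "r \<le> 1" "ball 0 r \<subseteq> \<phi> ` (U \<inter> V)" using r0 by (auto simp: r_def)
  have rd: "r ^ d \<le> 1" using r by (simp add: power_le_one)
  have rdp: "r ^ d > 0" using r by simp
  have h2s: "homeomorphism (ball (0::complex) 1) W \<psi>' \<psi>" using h2 homeomorphism_sym by blast
  have "openin (top_of_set (ball (0::complex) 1)) (ball 0 (r^d))"
    using rd by (intro open_subset) auto
  then have "openin (top_of_set W) (\<psi>' ` ball 0 (r^d))"
    using homeomorphism_imp_open_map[OF h2s] by blast
  then have G: "openin (top_of_set T) (\<psi>' ` ball 0 (r^d))" using W openin_trans by blast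
  have fpW: "f p \<in> W" using fU U by blast
  have fpG: "f p \<in> \<psi>' ` ball 0 (r^d)"
    proof -
    have "\<psi>' 0 = f p" using homeomorphism_apply1[OF h2 fpW] fp0 by simp
    moreover have "(0::complex) \<in> ball 0 (r^d)" using rdp by simp
    ultimately show ?thesis by (metis image_eqI)
  qed
  have ballsub: "ball (0::complex) r \<subseteq> ball 0 1" using r by auto
  have key: "{x\<in>U. f x = q} = \<phi>' ` {z. z ^ d = \<psi> q}" if q: "q \<in> \<psi>' ` ball 0 (r^d)" for q
  proof -
    obtain w where w: "w \<in> ball 0 (r^d)" "q = \<psi>' w" using q by blast
    have w1: "w \<in> ball 0 1" using w rd by auto
    have qW: "q \<in> W" using w1 w homeomorphism_image1[OF h2s] by blast
    have psq: "\<psi> q = w" using homeomorphism_apply2[OF h2 w1] w by simp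
    show ?thesis
    proof
      show "{x\<in>U. f x = q} \<subseteq> \<phi>' ` {z. z ^ d = \<psi> q}"
      proof
        fix x assume x: "x \<in> {x\<in>U. f x = q}"
        have zb: "\<phi> x \<in> ball 0 1" using x homeomorphism_image1[OF h1] by blast
        have xx: "\<phi>' (\<phi> x) = x" using x homeomorphism_apply1[OF h1] by blast
        have "(\<phi> x) ^ d = \<psi> q" using eq[rule_format, OF zb] xx x by simp
        then show "x \<in> \<phi>' ` {z. z ^ d = \<psi> q}" using xx by (metis (mono_tags) image_eqI mem_Collect_eq)
      qed
    next
      show "\<phi>' ` {z. z ^ d = \<psi> q} \<subseteq> {x\<in>U. f x = q}"
      proof
        fix x assume "x \<in> \<phi>' ` {z. z ^ d = \<psi> q}"
        then obtain z where z: "z ^ d = w" "x = \<phi>' z" using psq by blast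
        have "norm z < r" using roots_small[OF z(1) _ d r(1)] w(1) by simp
        then have zr: "z \<in> ball 0 r" by simp
        then have zb: "z \<in> ball 0 1" using ballsub by blast
        have xU: "x \<in> U" using zb z homeomorphism_image2[OF h1] by blast
        have e1: "\<psi> (f x) = \<psi> q" using eq[rule_format, OF zb] z psq by simp
        have "f x \<in> W" using xU fU by blast
        then have a1: "\<psi>' (\<psi> (f x)) = f x" using homeomorphism_apply1[OF h2] by blast
        have a2: "\<psi>' (\<psi> q) = q" using homeomorphism_apply1[OF h2] qW by blast
        have "f x = q" using a1 a2 e1 by metis
        then show "x \<in> {x\<in>U. f x = q}" using xU by blast
      qed
    qed
  qed
  show ?thesis
  proof (intro exI conjI ballI impI)
    show "openin (top_of_set T) (\<psi>' ` ball 0 (r^d))" by fact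
    show "f p \<in> \<psi>' ` ball 0 (r^d)" by fact
  next
    fix q assume q: "q \<in> \<psi>' ` ball 0 (r^d)" "q \<noteq> f p"
    obtain w where w: "w \<in> ball 0 (r^d)" "q = \<psi>' w" using q by blast
    have w1: "w \<in> ball 0 1" using w rd by auto
    have psq: "\<psi> q = w" using homeomorphism_apply2[OF h2 w1] w by simp
    have roots_r: "{z. z ^ d = \<psi> q} \<subseteq> ball 0 r"
      using roots_small[OF _ _ d r(1)] w(1) psq by auto
    show "{x\<in>U. f x = q} \<subseteq> V"
    proof
      fix x assume "x \<in> {x\<in>U. f x = q}"
      then obtain z where z: "z ^ d = \<psi> q" "x = \<phi>' z" using key[OF q(1)] by blast
      have "z \<in> \<phi> ` (U \<inter> V)" using z roots_r r(3) by blast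
      then obtain y where y: "y \<in> U \<inter> V" "z = \<phi> y" by blast
      then show "x \<in> V" using z homeomorphism_apply1[OF h1] by auto
    qed
    have "w \<noteq> 0" using q(2) w fp0 homeomorphism_apply1[OF h2 fpW] by auto
    have inj: "inj_on \<phi>' {z. z ^ d = \<psi> q}"
    proof (rule inj_onI)
      fix a b assume ab: "a \<in> {z. z ^ d = \<psi> q}" "b \<in> {z. z ^ d = \<psi> q}" "\<phi>' a = \<phi>' b"
      have "a \<in> ball 0 1" "b \<in> ball 0 1" using ab roots_r ballsub by auto
      then have "a = \<phi> (\<phi>' a)" "b = \<phi> (\<phi>' b)" using homeomorphism_apply2[OF h1] by auto
      then show "a = b" using ab(3) by simp
    qed
    have "card {x\<in>U. f x = q} = card {z. z ^ d = \<psi> q}"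
      using key[OF q(1)] card_image[OF inj] by simp
    also have "\<dots> = d" using card_nth_roots \<open>w \<noteq> 0\<close> psq d by simp
    finally show "card {x\<in>U. f x = q} = d" .
  next
    have "{x\<in>U. f x = f p} = \<phi>' ` {z. z ^ d = \<psi> (f p)}" using key[OF fpG] .
    also have "{z::complex. z ^ d = \<psi> (f p)} = {0}" using fp0 d by auto
    also have "\<phi>' ` {0} = {p}" using p0 homeomorphism_apply1[OF h1 U(2)] by simp
    finally show "{x\<in>U. f x = f p} = {p}" .
  qed
qed


lemma local_count:
  assumes lm: "local_model f S T p d"
  shows "1 \<le> d \<and> (\<exists>U. openin (top_of_set S) U \<and> p \<in> U \<and> {x\<in>U. f x = f p} = {p} \<and>
     (\<forall>V. openin (top_of_set S) V \<and> p \<in> V \<and> V \<subseteq> U \<longrightarrow>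
        (\<exists>G. openin (top_of_set T) G \<and> f p \<in> G \<and> (\<forall>q\<in>G. q \<noteq> f p \<longrightarrow> card {x\<in>V. f x = q} = d))))"
proof -
  obtain U W \<phi> \<phi>' \<psi> \<psi>' where d: "1 \<le> d" and U: "openin (top_of_set S) U" "p \<in> U"
    and W: "openin (top_of_set T) W" and fU: "f ` U = W"
    and h1: "homeomorphism U (ball (0::complex) 1) \<phi> \<phi>'"
    and h2: "homeomorphism W (ball (0::complex) 1) \<psi> \<psi>'"
    and p0: "\<phi> p = 0" and fp0: "\<psi> (f p) = 0"
    and eq: "\<forall>z\<in>ball 0 1. \<psi> (f (\<phi>' z)) = z ^ d"
    using lm unfolding local_model_def by blast
  note raw = local_count_raw[OF d U W fU h1 h2 p0 fp0 eq]
  have fib: "{x\<in>U. f x = f p} = {p}" using raw[OF U] by blast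
  have "\<exists>G. openin (top_of_set T) G \<and> f p \<in> G \<and> (\<forall>q\<in>G. q \<noteq> f p \<longrightarrow> card {x\<in>V. f x = q} = d)"
    if V: "openin (top_of_set S) V" "p \<in> V" "V \<subseteq> U" for V
  proof -
    obtain G where G: "openin (top_of_set T) G" "f p \<in> G"
      "\<forall>q\<in>G. q \<noteq> f p \<longrightarrow> {x\<in>U. f x = q} \<subseteq> V \<and> card {x\<in>U. f x = q} = d"
      using raw[OF V(1,2)] by blast
    have "card {x\<in>V. f x = q} = d" if "q \<in> G" "q \<noteq> f p" for q
    proof -
      have "{x\<in>V. f x = q} = {x\<in>U. f x = q}" using G(3) that V(3) by blast
      then show ?thesis using G(3) that by simp
    qed
    then show ?thesis using G by blast
  qed
  then show ?thesis using d U fib by blast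
qed
lemma nonisolated:
  assumes lm: "local_model f S T p d" and G: "openin (top_of_set T) G" "f p \<in> G"
  shows "\<exists>q\<in>G. q \<noteq> f p"
proof -
  obtain U W \<phi> \<phi>' \<psi> \<psi>' where U: "openin (top_of_set S) U" "p \<in> U"
    and W: "openin (top_of_set T) W" and fU: "f ` U = W"
    and h2: "homeomorphism W (ball (0::complex) 1) \<psi> \<psi>'"
    and fp0: "\<psi> (f p) = 0"
    using lm unfolding local_model_def by blast
  have fpW: "f p \<in> W" using fU U by blast
  have "openin (top_of_set W) (G \<inter> W)"
    using G(1) W by (meson inf_le2 openin_Int openin_imp_subset openin_subset_trans)
  then have "openin (top_of_set (ball 0 1)) (\<psi> ` (G \<inter> W))"
    using homeomorphism_imp_open_map[OF h2] by blast
  then have op: "open (\<psi> ` (G \<inter> W))" using openin_open_trans by blast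
  have "0 \<in> \<psi> ` (G \<inter> W)" using fp0 G fpW by (metis IntI image_eqI)
  then obtain e0 where e0: "e0 > 0" "ball 0 e0 \<subseteq> \<psi> ` (G \<inter> W)"
    using op open_contains_ball by blast
  define z where "z = complex_of_real (min e0 1 / 2)"
  have zb: "z \<in> ball 0 e0" using e0 by (auto simp: z_def)
  have z0: "z \<noteq> 0" using e0 by (auto simp: z_def)
  obtain q where q: "q \<in> G \<inter> W" "\<psi> q = z" using zb e0 by blast
  have "q \<noteq> f p" using q fp0 z0 by auto
  then show ?thesis using q by blast
qed

lemma local_model_unique:
  assumes m1: "local_model f S T p d" and m2: "local_model f S T p d'"
  shows "d = d'"
proof -
  obtain U1 where U1: "openin (top_of_set S) U1" "p \<in> U1" and
    H1: "\<forall>V. openin (top_of_set S) V \<and> p \<in> V \<and> V \<subseteq> U1 \<longrightarrow>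
        (\<exists>G. openin (top_of_set T) G \<and> f p \<in> G \<and> (\<forall>q\<in>G. q \<noteq> f p \<longrightarrow> card {x\<in>V. f x = q} = d))"
    using local_count[OF m1] by blast
  obtain U2 where U2: "openin (top_of_set S) U2" "p \<in> U2" and
    H2: "\<forall>V. openin (top_of_set S) V \<and> p \<in> V \<and> V \<subseteq> U2 \<longrightarrow>
        (\<exists>G. openin (top_of_set T) G \<and> f p \<in> G \<and> (\<forall>q\<in>G. q \<noteq> f p \<longrightarrow> card {x\<in>V. f x = q} = d'))"
    using local_count[OF m2] by blast
  have V: "openin (top_of_set S) (U1 \<inter> U2)" "p \<in> U1 \<inter> U2" using U1 U2 by auto
  obtain G1 where G1: "openin (top_of_set T) G1" "f p \<in> G1" "\<forall>q\<in>G1. q \<noteq> f p \<longrightarrow> card {x\<in>U1 \<inter> U2. f x = q} = d"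
    using H1 V by blast
  obtain G2 where G2: "openin (top_of_set T) G2" "f p \<in> G2" "\<forall>q\<in>G2. q \<noteq> f p \<longrightarrow> card {x\<in>U1 \<inter> U2. f x = q} = d'"
    using H2 V by blast
  obtain q where q: "q \<in> G1 \<inter> G2" "q \<noteq> f p"
    using nonisolated[OF m1 openin_Int[OF G1(1) G2(1)]] G1(2) G2(2) by blast
  show ?thesis using G1(3) G2(3) q by auto
qed

lemma local_degree_eq:
  assumes "local_model f S T p d"
  shows "local_degree f S T p = d"
  unfolding local_degree_def using assms local_model_unique by blast

lemma local_model_inj_one:
  assumes m: "local_model f S T p d" and N: "openin (top_of_set S) N" "p \<in> N" "inj_on f N"
  shows "d = 1"
proof -
  obtain U1 where U1: "openin (top_of_set S) U1" "p \<in> U1" and d: "1 \<le> d" and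
    H1: "\<forall>V. openin (top_of_set S) V \<and> p \<in> V \<and> V \<subseteq> U1 \<longrightarrow>
        (\<exists>G. openin (top_of_set T) G \<and> f p \<in> G \<and> (\<forall>q\<in>G. q \<noteq> f p \<longrightarrow> card {x\<in>V. f x = q} = d))"
    using local_count[OF m] by blast
  have V: "openin (top_of_set S) (U1 \<inter> N)" "p \<in> U1 \<inter> N" using U1 N by auto
  obtain G1 where G1: "openin (top_of_set T) G1" "f p \<in> G1" "\<forall>q\<in>G1. q \<noteq> f p \<longrightarrow> card {x\<in>U1 \<inter> N. f x = q} = d"
    using H1 V by blast
  obtain q where q: "q \<in> G1" "q \<noteq> f p"
    using nonisolated[OF m G1(1,2)] by blast
  have c: "card {x\<in>U1 \<inter> N. f x = q} = d" using G1(3) q by auto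
  have fin: "finite {x\<in>U1 \<inter> N. f x = q}" using c d by (metis card.infinite not_one_le_zero)
  have "card {x\<in>U1 \<inter> N. f x = q} \<le> Suc 0"
    using fin N(3) by (subst card_le_Suc0_iff_eq) (auto simp: inj_on_def)
  then show ?thesis using c d by simp
qed


lemma bc_local_model:
  assumes "branched_covering f S T" "x \<in> S"
  shows "local_model f S T x (local_degree f S T x)"
proof -
  obtain d where "local_model f S T x d" using assms unfolding branched_covering_def by blast
  then show ?thesis using local_degree_eq by metis
qed

lemma fibre_closed:
  assumes bc: "branched_covering f S T" and HT: "Hausdorff_space (top_of_set T)" and q: "q \<in> T"
  shows "closedin (top_of_set S) {x\<in>S. f x = q}"
proof -
  have c: "continuous_on S f" "f ` S = T" using bc unfolding branched_covering_def by auto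
  have "closedin (top_of_set T) {q}"
    using closedin_t1_singleton[OF Hausdorff_imp_t1_space[OF HT]] q by simp
  moreover have "f \<in> S \<rightarrow> T" using c(2) by auto
  ultimately have "closedin (top_of_set S) (S \<inter> f -` {q})"
    using continuous_closedin_preimage_gen[OF c(1)] by blast
  moreover have "S \<inter> f -` {q} = {x\<in>S. f x = q}" by auto
  ultimately show ?thesis by simp
qed

lemma fibre_finite:
  assumes bc: "branched_covering f S T" and cS: "compact S"
    and HT: "Hausdorff_space (top_of_set T)" and q: "q \<in> T"
  shows "finite {x\<in>S. f x = q}"
proof -
  let ?P = "{x\<in>S. f x = q}"
  have cP: "compact ?P" using closedin_compact[OF cS fibre_closed[OF bc HT q]] .
  have "\<forall>p\<in>?P. \<exists>Ob. open Ob \<and> p \<in> Ob \<and> ?P \<inter> Ob \<subseteq> {p}"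
  proof
    fix p assume p: "p \<in> ?P"
    have pS: "p \<in> S" using p by simp
    obtain U where U: "openin (top_of_set S) U" "p \<in> U" "{x\<in>U. f x = f p} = {p}"
      using local_count[OF bc_local_model[OF bc pS]] by (elim conjE exE) (rule that)
    obtain Ob where Ob: "open Ob" "U = S \<inter> Ob" using openin_open[THEN iffD1, OF U(1)] by blast
    have "?P \<inter> Ob \<subseteq> {x\<in>U. f x = f p}" using Ob(2) p by auto
    then have "?P \<inter> Ob \<subseteq> {p}" using U(3) by simp
    then show "\<exists>Ob. open Ob \<and> p \<in> Ob \<and> ?P \<inter> Ob \<subseteq> {p}" using Ob U(2) by blast
  qed
  from bchoice[OF this] obtain Ob where Ob: "\<forall>p\<in>?P. open (Ob p) \<and> p \<in> Ob p \<and> ?P \<inter> Ob p \<subseteq> {p}"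
    by (elim exE) (rule that)
  obtain C where C: "C \<subseteq> ?P" "finite C" "?P \<subseteq> (\<Union>c\<in>C. Ob c)"
    by (rule compactE_image[OF cP, of ?P Ob]) (use Ob in auto)
  have "?P \<subseteq> C"
  proof
    fix x assume x: "x \<in> ?P"
    then obtain c where "c \<in> C" "x \<in> Ob c" using C(3) by blast
    then have "x \<in> ?P \<inter> Ob c" "c \<in> ?P" using x C(1) by auto
    then have "x = c" using Ob by blast
    then show "x \<in> C" using \<open>c \<in> C\<close> by simp
  qed
  then show ?thesis using C(2) finite_subset by blast
qed


lemma deg_one:
  assumes bc: "branched_covering f S T" and x: "x \<in> S"
    and N: "openin (top_of_set S) N" "x \<in> N" "inj_on f N"
  shows "local_degree f S T x = 1"
  using local_model_inj_one[OF bc_local_model[OF bc x] N] .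

lemma locally_const:
  fixes f :: "'a::topological_space \<Rightarrow> 'b::topological_space"
  assumes bc: "branched_covering f S T" and cS: "compact S"
    and HS: "Hausdorff_space (top_of_set S)" and HT: "Hausdorff_space (top_of_set T)"
    and B: "finite B"
    and linj: "\<forall>x\<in>S. x \<notin> B \<longrightarrow> (\<exists>N. openin (top_of_set S) N \<and> x \<in> N \<and> inj_on f N)"
    and q0: "q0 \<in> T"
  shows "\<exists>G. openin (top_of_set T) G \<and> q0 \<in> G \<and>
     (\<forall>q\<in>G. (\<Sum>x\<in>{x\<in>S. f x = q}. local_degree f S T x) = (\<Sum>x\<in>{x\<in>S. f x = q0}. local_degree f S T x))"
proof -
  have cont: "continuous_on S f" and fS: "f ` S = T" using bc unfolding branched_covering_def by auto
  define P where "P = {x\<in>S. f x = q0}"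
  have finP: "finite P" unfolding P_def using fibre_finite[OF bc cS HT q0] .
  have PS: "P \<subseteq> S" unfolding P_def by auto
  have deg1: "local_degree f S T x = 1" if xS: "x \<in> S" and xB: "x \<notin> B" for x
  proof -
    obtain N where "openin (top_of_set S) N" "x \<in> N" "inj_on f N" using linj[rule_format, OF xS xB] by blast
    then show ?thesis using deg_one[OF bc xS] by blast
  qed
  have "\<forall>pp\<in>P\<times>P. \<exists>AA. fst pp \<noteq> snd pp \<longrightarrow> openin (top_of_set S) (fst AA) \<and> openin (top_of_set S) (snd AA)
      \<and> fst pp \<in> fst AA \<and> snd pp \<in> snd AA \<and> fst AA \<inter> snd AA = {}"
  proof
    fix pp assume pp: "pp \<in> P \<times> P"
    show "\<exists>AA. fst pp \<noteq> snd pp \<longrightarrow> openin (top_of_set S) (fst AA) \<and> openin (top_of_set S) (snd AA)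
      \<and> fst pp \<in> fst AA \<and> snd pp \<in> snd AA \<and> fst AA \<inter> snd AA = {}"
    proof (cases "fst pp = snd pp")
      case True then show ?thesis by blast
    next
      case False
      have "fst pp \<in> S" "snd pp \<in> S" using pp PS by auto
      then obtain A A' where "openin (top_of_set S) A" "openin (top_of_set S) A'" "fst pp \<in> A" "snd pp \<in> A'" "disjnt A A'"
        using HS False unfolding Hausdorff_space_def by (metis topspace_euclidean_subtopology)
      then show ?thesis by (intro exI[of _ "(A, A')"]) (auto simp: disjnt_def)
    qed
  qed
  from bchoice[OF this] obtain AA where AA: "\<forall>pp\<in>P\<times>P. fst pp \<noteq> snd pp \<longrightarrow> openin (top_of_set S) (fst (AA pp)) \<and> openin (top_of_set S) (snd (AA pp))
      \<and> fst pp \<in> fst (AA pp) \<and> snd pp \<in> snd (AA pp) \<and> fst (AA pp) \<inter> snd (AA pp) = {}"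
    by (elim exE) (rule that)
  define Sep where "Sep p = (\<Inter>p'\<in>P - {p}. fst (AA (p,p')) \<inter> snd (AA (p',p))) \<inter> S" for p
  have Sep_open: "openin (top_of_set S) (Sep p)" if p: "p \<in> P" for p
  proof -
    have "openin (top_of_set S) ((\<Inter>p'\<in>P - {p}. fst (AA (p,p')) \<inter> snd (AA (p',p))) \<inter> topspace (top_of_set S))"
    proof (rule openin_INT)
      show "finite (P - {p})" using finP by simp
      fix p' assume p': "p' \<in> P - {p}"
      then have "(p,p') \<in> P \<times> P" "(p',p) \<in> P \<times> P" "p \<noteq> p'" using p by auto
      then show "openin (top_of_set S) (fst (AA (p, p')) \<inter> snd (AA (p', p)))"
        using AA by (metis fst_conv snd_conv openin_Int)
    qed
    then show ?thesis unfolding Sep_def by simp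
  qed
  have Sep_mem: "p \<in> Sep p" if p: "p \<in> P" for p
  proof -
    have "p \<in> fst (AA (p,p')) \<inter> snd (AA (p',p))" if p': "p' \<in> P - {p}" for p'
    proof -
      have "(p,p') \<in> P \<times> P" "(p',p) \<in> P \<times> P" "p \<noteq> p'" using p p' by auto
      then show ?thesis using AA by (metis IntI fst_conv snd_conv)
    qed
    then show ?thesis unfolding Sep_def using p PS by blast
  qed
  have Sep_disj: "Sep p \<inter> Sep p' = {}" if "p \<in> P" "p' \<in> P" "p \<noteq> p'" for p p'
  proof -
    have "Sep p \<subseteq> fst (AA (p,p'))" unfolding Sep_def using that by blast
    moreover have "Sep p' \<subseteq> snd (AA (p,p'))" unfolding Sep_def using that by blast
    moreover have "fst (AA (p,p')) \<inter> snd (AA (p,p')) = {}"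
    proof -
      have "(p,p') \<in> P \<times> P" using that by auto
      then show ?thesis using AA that(3) by (metis fst_conv snd_conv)
    qed
    ultimately show ?thesis by blast
  qed
  have "\<forall>p\<in>P. \<exists>U. openin (top_of_set S) U \<and> p \<in> U \<and>
     (\<forall>V. openin (top_of_set S) V \<and> p \<in> V \<and> V \<subseteq> U \<longrightarrow>
        (\<exists>G. openin (top_of_set T) G \<and> f p \<in> G \<and> (\<forall>q\<in>G. q \<noteq> f p \<longrightarrow> card {x\<in>V. f x = q} = local_degree f S T p)))"
  proof
    fix p assume "p \<in> P"
    then have pS: "p \<in> S" using PS by auto
    show "\<exists>U. openin (top_of_set S) U \<and> p \<in> U \<and>
     (\<forall>V. openin (top_of_set S) V \<and> p \<in> V \<and> V \<subseteq> U \<longrightarrow>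
        (\<exists>G. openin (top_of_set T) G \<and> f p \<in> G \<and> (\<forall>q\<in>G. q \<noteq> f p \<longrightarrow> card {x\<in>V. f x = q} = local_degree f S T p)))"
      using local_count[OF bc_local_model[OF bc pS]] by (elim conjE exE) (intro exI conjI, assumption+)
  qed
  from bchoice[OF this] obtain Uf where Uf: "\<forall>p\<in>P. openin (top_of_set S) (Uf p) \<and> p \<in> Uf p \<and>
     (\<forall>V. openin (top_of_set S) V \<and> p \<in> V \<and> V \<subseteq> Uf p \<longrightarrow>
        (\<exists>G. openin (top_of_set T) G \<and> f p \<in> G \<and> (\<forall>q\<in>G. q \<noteq> f p \<longrightarrow> card {x\<in>V. f x = q} = local_degree f S T p)))"
    by (elim exE) (rule that)
  define V where "V p = Uf p \<inter> Sep p" for p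
  have V_open: "openin (top_of_set S) (V p)" and V_mem: "p \<in> V p" and VU: "V p \<subseteq> Uf p"
    if "p \<in> P" for p
    using that Uf Sep_open Sep_mem unfolding V_def by auto
  have VS: "V p \<subseteq> S" if "p \<in> P" for p using openin_imp_subset[OF V_open[OF that]] .
  have V_disj: "V p \<inter> V p' = {}" if "p \<in> P" "p' \<in> P" "p \<noteq> p'" for p p'
    using Sep_disj[OF that] unfolding V_def by blast
  have "\<forall>p\<in>P. \<exists>G. openin (top_of_set T) G \<and> f p \<in> G \<and> (\<forall>q\<in>G. q \<noteq> f p \<longrightarrow> card {x\<in>V p. f x = q} = local_degree f S T p)"
  proof
    fix p assume p: "p \<in> P"
    show "\<exists>G. openin (top_of_set T) G \<and> f p \<in> G \<and> (\<forall>q\<in>G. q \<noteq> f p \<longrightarrow> card {x\<in>V p. f x = q} = local_degree f S T p)"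
      using Uf p V_open[OF p] V_mem[OF p] VU[OF p] by blast
  qed
  from bchoice[OF this] obtain Gf where Gf: "\<forall>p\<in>P. openin (top_of_set T) (Gf p) \<and> f p \<in> Gf p \<and> (\<forall>q\<in>Gf p. q \<noteq> f p \<longrightarrow> card {x\<in>V p. f x = q} = local_degree f S T p)"
    by (elim exE) (rule that)
  define K where "K = S - (\<Union>p\<in>P. V p)"
  have "openin (top_of_set S) (\<Union>p\<in>P. V p)" using V_open by blast
  then have "closedin (top_of_set S) K" unfolding K_def
    by (metis closedin_diff closedin_topspace topspace_euclidean_subtopology)
  then have cK: "compact K" using closedin_compact[OF cS] by blast
  have KS: "K \<subseteq> S" unfolding K_def by auto
  have "compact (f ` K)" using compact_continuous_image[OF continuous_on_subset[OF cont KS] cK] .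
  moreover have "f ` K \<subseteq> T" using KS fS by auto
  ultimately have "compactin (top_of_set T) (f ` K)" by (simp add: compactin_subtopology)
  then have cfK: "closedin (top_of_set T) (f ` K)" using compactin_imp_closedin[OF HT] by blast
  define FB where "FB = f ` (B \<inter> S) - {q0}"
  have "finite FB" "FB \<subseteq> T" using B fS unfolding FB_def by auto
  then have cFB: "closedin (top_of_set T) FB"
    using Hausdorff_imp_t1_space[OF HT] unfolding t1_space_closedin_finite by simp
  have "closedin (top_of_set T) (f ` K \<union> FB)" using cfK cFB by blast
  then have G0: "openin (top_of_set T) (T - (f ` K \<union> FB))"
    by (metis openin_diff openin_topspace topspace_euclidean_subtopology)
  define G where "G = (T - (f ` K \<union> FB)) \<inter> ((\<Inter>p\<in>P. Gf p) \<inter> T)"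
  have "openin (top_of_set T) ((\<Inter>p\<in>P. Gf p) \<inter> topspace (top_of_set T))"
    using finP Gf by (intro openin_INT) auto
  then have Gopen: "openin (top_of_set T) G" unfolding G_def using G0 by (simp add: openin_Int)
  have q0K: "q0 \<notin> f ` K"
  proof
    assume "q0 \<in> f ` K"
    then obtain x where x: "x \<in> K" "f x = q0" by blast
    then have "x \<in> P" unfolding P_def K_def by auto
    then have "x \<in> V x" using V_mem by blast
    then show False using x \<open>x \<in> P\<close> unfolding K_def by blast
  qed
  have fpq0: "f p = q0" if "p \<in> P" for p using that unfolding P_def by simp
  have q0G: "q0 \<in> G" unfolding G_def FB_def using q0 q0K Gf fpq0 by auto
  have "(\<Sum>x\<in>{x\<in>S. f x = q}. local_degree f S T x) = (\<Sum>x\<in>{x\<in>S. f x = q0}. local_degree f S T x)"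
    if q: "q \<in> G" for q
  proof (cases "q = q0")
    case True then show ?thesis by simp
  next
    case False
    have qT: "q \<in> T" using q unfolding G_def by auto
    have qK: "q \<notin> f ` K" and qFB: "q \<notin> FB" using q unfolding G_def by auto
    have qGf: "q \<in> Gf p" if "p \<in> P" for p using q that unfolding G_def by auto
    have cards: "card {x\<in>V p. f x = q} = local_degree f S T p" if p: "p \<in> P" for p
      using Gf p qGf[OF p] False fpq0[OF p] by auto
    have fibeq: "{x\<in>S. f x = q} = (\<Union>p\<in>P. {x\<in>V p. f x = q})"
    proof
      show "{x\<in>S. f x = q} \<subseteq> (\<Union>p\<in>P. {x\<in>V p. f x = q})"
      proof
        fix x assume x: "x \<in> {x\<in>S. f x = q}"
        have "x \<notin> K" using x qK by auto
        then obtain p where "p \<in> P" "x \<in> V p" using x unfolding K_def by auto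
        then show "x \<in> (\<Union>p\<in>P. {x\<in>V p. f x = q})" using x by auto
      qed
      show "(\<Union>p\<in>P. {x\<in>V p. f x = q}) \<subseteq> {x\<in>S. f x = q}" using VS by auto
    qed
    have finq: "finite {x\<in>S. f x = q}" using fibre_finite[OF bc cS HT qT] .
    have "(\<Sum>x\<in>{x\<in>S. f x = q}. local_degree f S T x) = (\<Sum>x\<in>{x\<in>S. f x = q}. 1)"
    proof (rule sum.cong)
      fix x assume x: "x \<in> {x\<in>S. f x = q}"
      have "x \<notin> B"
      proof
        assume "x \<in> B"
        then have "q \<in> FB" using x False unfolding FB_def by auto
        then show False using qFB by simp
      qed
      then show "local_degree f S T x = 1" using deg1 x by auto
    qed simp
    also have "\<dots> = card {x\<in>S. f x = q}" by simp
    also have "\<dots> = card (\<Union>p\<in>P. {x\<in>V p. f x = q})" using fibeq by simp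
    also have "\<dots> = (\<Sum>p\<in>P. card {x\<in>V p. f x = q})"
    proof (rule card_UN_disjoint[OF finP])
      show "\<forall>p\<in>P. finite {x\<in>V p. f x = q}"
        using finq fibeq by (metis (no_types, lifting) UN_upper finite_subset)
      show "\<forall>p\<in>P. \<forall>p'\<in>P. p \<noteq> p' \<longrightarrow> {x\<in>V p. f x = q} \<inter> {x\<in>V p'. f x = q} = {}"
        using V_disj by blast
    qed
    also have "\<dots> = (\<Sum>p\<in>P. local_degree f S T p)" using cards by simp
    finally show ?thesis unfolding P_def .
  qed
  then show ?thesis using Gopen q0G by blast
qed


lemma fibre_sum_degree:
  fixes f :: "'a::topological_space \<Rightarrow> 'b::topological_space"
  assumes bc: "branched_covering f S T" and cS: "compact S"
    and HS: "Hausdorff_space (top_of_set S)" and HT: "Hausdorff_space (top_of_set T)"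
    and B: "finite B"
    and linj: "\<forall>x\<in>S. x \<notin> B \<longrightarrow> (\<exists>N. openin (top_of_set S) N \<and> x \<in> N \<and> inj_on f N)"
    and conn: "connected T" and infT: "infinite T"
    and q: "q \<in> T"
  shows "(\<Sum>x\<in>{x\<in>S. f x = q}. local_degree f S T x) = bc_degree f S T"
proof -
  define Nf where "Nf q = (\<Sum>x\<in>{x\<in>S. f x = q}. local_degree f S T x)" for q
  have const: "Nf a = Nf b" if "a \<in> T" "b \<in> T" for a b
  proof (rule connected_equivalence_relation[OF conn that, where R = "\<lambda>x y. Nf x = Nf y"])
    fix a assume aT: "a \<in> T"
    obtain G where G: "openin (top_of_set T) G" "a \<in> G" "\<forall>q\<in>G. (\<Sum>x\<in>{x\<in>S. f x = q}. local_degree f S T x) = (\<Sum>x\<in>{x\<in>S. f x = a}. local_degree f S T x)"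
      using locally_const[OF bc cS HS HT B linj aT] by (elim exE conjE) (rule that)
    show "\<exists>G. openin (top_of_set T) G \<and> a \<in> G \<and> (\<forall>x\<in>G. Nf a = Nf x)"
    proof (rule exI[of _ G], intro conjI ballI)
      show "openin (top_of_set T) G" "a \<in> G" using G(1,2) .
      fix x assume "x \<in> G"
      have "Nf x = Nf a" unfolding Nf_def using G(3) \<open>x \<in> G\<close> by (rule bspec)
      then show "Nf a = Nf x" by (rule sym)
    qed
  qed auto
  have deg1: "local_degree f S T x = 1" if xS: "x \<in> S" and xB: "x \<notin> B" for x
  proof -
    obtain N where "openin (top_of_set S) N" "x \<in> N" "inj_on f N" using linj[rule_format, OF xS xB] by blast
    then show ?thesis using deg_one[OF bc xS] by blast
  qed
  have "finite (f ` (B \<inter> S))" using B by simp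
  then have "\<not> T \<subseteq> f ` (B \<inter> S)" using infT finite_subset by blast
  then obtain q1 where q1: "q1 \<in> T" "q1 \<notin> f ` (B \<inter> S)" by blast
  have "\<not> critical_value f S T q1"
    unfolding critical_value_def
  proof
    assume "\<exists>p\<in>S. f p = q1 \<and> local_degree f S T p \<noteq> 1"
    then obtain p where p: "p \<in> S" "f p = q1" "local_degree f S T p \<noteq> 1" by blast
    then have "p \<notin> B" using q1(2) by blast
    then show False using deg1 p by blast
  qed
  then have ex: "\<exists>q. q \<in> T \<and> \<not> critical_value f S T q" using q1 by blast
  define qs where "qs = (SOME q. q \<in> T \<and> \<not> critical_value f S T q)"
  have qs: "qs \<in> T" "\<not> critical_value f S T qs" using someI_ex[OF ex] unfolding qs_def by auto
  have "Nf qs = (\<Sum>x\<in>{x\<in>S. f x = qs}. 1)" unfolding Nf_def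
  proof (rule sum.cong)
    fix x assume "x \<in> {x\<in>S. f x = qs}"
    then show "local_degree f S T x = 1" using qs(2) unfolding critical_value_def by blast
  qed simp
  also have "\<dots> = card {x\<in>S. f x = qs}" by simp
  also have "{x\<in>S. f x = qs} = S \<inter> f -` {qs}" by auto
  also have "card \<dots> = bc_degree f S T" unfolding bc_degree_def qs_def by simp
  finally have "Nf qs = bc_degree f S T" .
  then show ?thesis using const[OF q qs(1)] unfolding Nf_def by simp
qed


lemma sphere3_infinite: "infinite (sphere (0::real^3) 1)"
proof
  assume fin: "finite (sphere (0::real^3) 1)"
  have conn: "connected (sphere (0::real^3) 1)" by (rule connected_sphere) simp
  have "sphere (0::real^3) 1 \<noteq> {}" by simp
  then obtain x :: "real^3" where x: "x \<in> sphere 0 1" by blast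
  have mx: "-x \<in> sphere 0 1" using x by simp
  have "x \<noteq> -x"
  proof
    assume "x = -x"
    then have "x + x = 0" by (metis add.right_inverse)
    then have "(2::real) *\<^sub>R x = 0" by (simp add: scaleR_2)
    then have "x = 0" by simp
    then show False using x by simp
  qed
  obtain a where "sphere (0::real^3) 1 = {} \<or> sphere (0::real^3) 1 = {a}"
    using connected_finite_iff_sing[OF conn] fin by blast
  then have "x = a" "-x = a" using x mx by auto
  then show False using \<open>x \<noteq> -x\<close> by simp
qed

lemma sphere_props:
  fixes S :: "'a::topological_space set"
  assumes "topological_2sphere S"
  shows "compact S" "connected S" "infinite S" "Hausdorff_space (top_of_set S)"
proof -
  have hom: "S homeomorphic (sphere (0::real^3) 1)" using assms unfolding topological_2sphere_def .
  show "compact S" using homeomorphic_compactness[OF hom] by simp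
  show "connected S" using homeomorphic_connectedness[OF hom] connected_sphere[of "0::real^3" 1] by simp
  obtain g h where gh: "homeomorphism S (sphere (0::real^3) 1) g h" using hom unfolding homeomorphic_def by blast
  show "infinite S"
  proof
    assume "finite S"
    then have "finite (g ` S)" by simp
    then show False using homeomorphism_image1[OF gh] sphere3_infinite by simp
  qed
  show "Hausdorff_space (top_of_set S)"
    unfolding Hausdorff_space_def
  proof (intro allI impI)
    fix x y assume xy: "x \<in> topspace (top_of_set S) \<and> y \<in> topspace (top_of_set S) \<and> x \<noteq> y"
    then have xS: "x \<in> S" and yS: "y \<in> S" and ne: "x \<noteq> y" by auto
    have "g x \<noteq> g y" using ne homeomorphism_apply1[OF gh xS] homeomorphism_apply1[OF gh yS] by metis
    then obtain U V where UV: "open U" "open V" "g x \<in> U" "g y \<in> V" "U \<inter> V = {}"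
      using separation_t2[THEN iffD1, OF \<open>g x \<noteq> g y\<close>] by (elim exE conjE) (rule that)
    have cg: "continuous_on S g" using gh homeomorphism_cont1 by blast
    have "openin (top_of_set S) (S \<inter> g -` U)" "openin (top_of_set S) (S \<inter> g -` V)"
      using continuous_openin_preimage_gen[OF cg] UV by auto
    moreover have "x \<in> S \<inter> g -` U" "y \<in> S \<inter> g -` V" using xS yS UV by auto
    moreover have "disjnt (S \<inter> g -` U) (S \<inter> g -` V)" using UV(5) by (auto simp: disjnt_def)
    ultimately show "\<exists>U V. openin (top_of_set S) U \<and> openin (top_of_set S) V \<and> x \<in> U \<and> y \<in> V \<and> disjnt U V"
      by blast
  qed
qed


lemma covering_linj:
  assumes cov: "covering_space (S - B) f (T - Z)" and fin: "finite B" and BS: "B \<subseteq> S"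
    and HS: "Hausdorff_space (top_of_set S)"
  shows "\<forall>x\<in>S. x \<notin> B \<longrightarrow> (\<exists>N. openin (top_of_set S) N \<and> x \<in> N \<and> inj_on f N)"
proof (intro ballI impI)
  fix x assume xS: "x \<in> S" and xB: "x \<notin> B"
  have img: "f ` (S - B) = T - Z" using cov unfolding covering_space_def by blast
  have fx: "f x \<in> T - Z" using img xS xB by blast
  obtain T' vs where T': "f x \<in> T'" "openin (top_of_set (T - Z)) T'"
    and vs: "\<Union>vs = (S - B) \<inter> f -` T'" "\<forall>u\<in>vs. openin (top_of_set (S - B)) u"
       "\<forall>u\<in>vs. \<exists>q. homeomorphism u T' f q"
    using cov fx unfolding covering_space_def by (elim conjE) (meson)
  have "x \<in> (S - B) \<inter> f -` T'" using xS xB T' by simp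
  then obtain u where u: "u \<in> vs" "x \<in> u" using vs(1) by blast
  have "closedin (top_of_set S) B"
    using Hausdorff_imp_t1_space[OF HS] fin BS unfolding t1_space_closedin_finite by simp
  then have "openin (top_of_set S) (S - B)"
    by (metis openin_diff openin_topspace topspace_euclidean_subtopology)
  then have uo: "openin (top_of_set S) u" using vs(2) u(1) openin_trans by blast
  obtain q where "homeomorphism u T' f q" using vs(3) u(1) by blast
  then have "inj_on f u" by (metis homeomorphism_apply1 inj_on_inverseI)
  then show "\<exists>N. openin (top_of_set S) N \<and> x \<in> N \<and> inj_on f N" using uo u(2) by blast
qed


lemma vertex_sum:
  assumes cov: "tree_cover VY EY Y SY iY VZ EZ Z SZ iZ F f"
    and v': "v' \<in> internal_vertices VY EY" and e: "e \<in> edges_at EZ (F v')"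
  shows "(\<Sum>e'\<in>{e'\<in>edges_at EY v'. F ` e' = e}. local_degree (f v') (SY v') (SZ (F v')) (iY v' e'))
         = bc_degree (f v') (SY v') (SZ (F v'))"
proof -
  let ?w = "F v'"
  let ?S = "SY v'" and ?T = "SZ ?w" and ?g = "f v'"
  let ?B = "marked_points EY iY v'" and ?Zw = "marked_points EZ iZ ?w"
  note C = cov[unfolded tree_cover_def]
  have TY: "tree_of_spheres VY EY Y SY iY" using C by (elim conjE) assumption
  have TZ: "tree_of_spheres VZ EZ Z SZ iZ" using C by (elim conjE) assumption
  have Fint: "F ` internal_vertices VY EY \<subseteq> internal_vertices VZ EZ" using C by (elim conjE) assumption
  have loc: "\<forall>v\<in>internal_vertices VY EY.
        branched_covering (f v) (SY v) (SZ (F v)) \<and>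
        covering_space (SY v - marked_points EY iY v) (f v)
                       (SZ (F v) - marked_points EZ iZ (F v)) \<and>
        (\<forall>e\<in>edges_at EY v. f v (iY v e) = iZ (F v) (F ` e))" using C by (elim conjE) assumption
  have FE: "\<forall>e\<in>EY. F ` e \<in> EZ" using C by (elim conjE) assumption
  have w: "?w \<in> internal_vertices VZ EZ" using Fint v' by blast
  note L = loc[rule_format, OF v']
  have bc: "branched_covering ?g ?S ?T" using L by (elim conjE) assumption
  have cv: "covering_space (?S - ?B) ?g (?T - ?Zw)" using L by (elim conjE) assumption
  have compat: "\<forall>e\<in>edges_at EY v'. ?g (iY v' e) = iZ ?w (F ` e)" using L by (elim conjE) assumption
  note LY = TY[unfolded tree_of_spheres_def, THEN conjunct2, rule_format, OF v']
  have sY: "topological_2sphere ?S" using LY by (elim conjE) assumption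
  have injY: "inj_on (iY v') (edges_at EY v')" using LY by (elim conjE) assumption
  have subY: "iY v' ` edges_at EY v' \<subseteq> ?S" using LY by (elim conjE) assumption
  note LZ = TZ[unfolded tree_of_spheres_def, THEN conjunct2, rule_format, OF w]
  have sZ: "topological_2sphere ?T" using LZ by (elim conjE) assumption
  have injZ: "inj_on (iZ ?w) (edges_at EZ ?w)" using LZ by (elim conjE) assumption
  have subZ: "iZ ?w ` edges_at EZ ?w \<subseteq> ?T" using LZ by (elim conjE) assumption
  have finEY: "finite EY"
  proof -
    have "is_tree VY EY" using TY unfolding tree_of_spheres_def marked_tree_def by blast
    then have "finite VY" "\<forall>e\<in>EY. e \<subseteq> VY" unfolding is_tree_def by blast+
    then have "EY \<subseteq> Pow VY" by blast
    then show ?thesis using \<open>finite VY\<close> finite_subset by blast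
  qed
  have finEv: "finite (edges_at EY v')" unfolding edges_at_def using finEY by simp
  have finB: "finite ?B" unfolding marked_points_def using finEv by simp
  have BS: "?B \<subseteq> ?S" unfolding marked_points_def using subY .
  have HS: "Hausdorff_space (top_of_set ?S)" and cS: "compact ?S" using sphere_props[OF sY] by blast+
  have HT: "Hausdorff_space (top_of_set ?T)" "connected ?T" "infinite ?T" using sphere_props[OF sZ] by blast+
  have linj: "\<forall>x\<in>?S. x \<notin> ?B \<longrightarrow> (\<exists>N. openin (top_of_set ?S) N \<and> x \<in> N \<and> inj_on ?g N)"
    using covering_linj[OF cv finB BS HS] .
  have qT: "iZ ?w e \<in> ?T" using subZ e by blast
  have main: "(\<Sum>x\<in>{x\<in>?S. ?g x = iZ ?w e}. local_degree ?g ?S ?T x) = bc_degree ?g ?S ?T"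
    using fibre_sum_degree[OF bc cS HS HT(1) finB linj HT(2) HT(3) qT] .
  have img: "?g ` (?S - ?B) = ?T - ?Zw" using cv unfolding covering_space_def by blast
  have fib: "{x\<in>?S. ?g x = iZ ?w e} = iY v' ` {e'\<in>edges_at EY v'. F ` e' = e}"
  proof
    show "iY v' ` {e'\<in>edges_at EY v'. F ` e' = e} \<subseteq> {x\<in>?S. ?g x = iZ ?w e}"
    proof
      fix x assume "x \<in> iY v' ` {e'\<in>edges_at EY v'. F ` e' = e}"
      then obtain e' where e': "e' \<in> edges_at EY v'" "F ` e' = e" "x = iY v' e'" by blast
      have "x \<in> ?S" using e' subY by blast
      moreover have "?g x = iZ ?w e" using compat e' by simp
      ultimately show "x \<in> {x\<in>?S. ?g x = iZ ?w e}" by simp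
    qed
  next
    show "{x\<in>?S. ?g x = iZ ?w e} \<subseteq> iY v' ` {e'\<in>edges_at EY v'. F ` e' = e}"
    proof
      fix x assume x: "x \<in> {x\<in>?S. ?g x = iZ ?w e}"
      have qZ: "iZ ?w e \<in> ?Zw" unfolding marked_points_def using e by blast
      have "x \<in> ?B"
      proof (rule ccontr)
        assume "x \<notin> ?B"
        then have "?g x \<in> ?T - ?Zw" using img x by blast
        then show False using x qZ by simp
      qed
      then obtain e' where e': "e' \<in> edges_at EY v'" "x = iY v' e'" unfolding marked_points_def by blast
      have e'E: "e' \<in> EY" "v' \<in> e'" using e'(1) unfolding edges_at_def by auto
      have "F ` e' \<in> edges_at EZ ?w" using FE e'E unfolding edges_at_def by blast
      moreover have "iZ ?w (F ` e') = iZ ?w e" using compat e' x by simp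
      ultimately have "F ` e' = e" using injZ e unfolding inj_on_def by blast
      then show "x \<in> iY v' ` {e'\<in>edges_at EY v'. F ` e' = e}" using e' by blast
    qed
  qed
  have injsub: "inj_on (iY v') {e'\<in>edges_at EY v'. F ` e' = e}" using injY by (rule inj_on_subset) blast
  have "(\<Sum>e'\<in>{e'\<in>edges_at EY v'. F ` e' = e}. local_degree ?g ?S ?T (iY v' e'))
      = (\<Sum>x\<in>iY v' ` {e'\<in>edges_at EY v'. F ` e' = e}. local_degree ?g ?S ?T x)"
    using sum.reindex[OF injsub, of "local_degree ?g ?S ?T"] by (simp add: comp_def)
  also have "\<dots> = bc_degree ?g ?S ?T" using main fib by simp
  finally show ?thesis .
qed


lemma two_elem_eq:
  assumes "e = {x, y}" "a \<in> e" "b \<in> e" "a \<noteq> b"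
  shows "e = {a, b}"
  using assms by auto

theorem lemma2p19:
  fixes VY :: "'v set" and EY :: "'v set set" and Y :: "'v set"
    and SY :: "'v \<Rightarrow> 'a::topological_space set" and iY :: "'v \<Rightarrow> 'v set \<Rightarrow> 'a"
    and VZ :: "'w set" and EZ :: "'w set set" and Z :: "'w set"
    and SZ :: "'w \<Rightarrow> 'b::topological_space set" and iZ :: "'w \<Rightarrow> 'w set \<Rightarrow> 'b"
    and F :: "'v \<Rightarrow> 'w" and f :: "'v \<Rightarrow> 'a \<Rightarrow> 'b"
    and v :: 'w and e :: "'w set"
  assumes "tree_cover VY EY Y SY iY VZ EZ Z SZ iZ F f"
    and "v \<in> VZ"
    and "e \<in> edges_at EZ v"
  shows "(\<Sum>e'\<in>{e'\<in>EY. F ` e' = e}. edge_degree VY EY SY iY SZ F f e')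
       = (\<Sum>v'\<in>{v'\<in>VY. F v' = v}. vertex_degree VY EY SY iY SZ F f v')"
proof -
  note cov = assms(1)
  note vV = assms(2)
  note eV = assms(3)
  note C = cov[unfolded tree_cover_def]
  have TY: "tree_of_spheres VY EY Y SY iY" using C by (elim conjE) assumption
  have TZ: "tree_of_spheres VZ EZ Z SZ iZ" using C by (elim conjE) assumption
  have Fint: "F ` internal_vertices VY EY \<subseteq> internal_vertices VZ EZ" using C by (elim conjE) assumption
  have FY: "F ` Y \<subseteq> Z" using C by (elim conjE) assumption
  have FE: "\<forall>e\<in>EY. F ` e \<in> EZ" using C by (elim conjE) assumption
  have cc: "\<forall>e\<in>EY. \<forall>v1\<in>internal_vertices VY EY. \<forall>v2\<in>internal_vertices VY EY.
        e = {v1, v2} \<longrightarrow>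
        local_degree (f v1) (SY v1) (SZ (F v1)) (iY v1 e) =
        local_degree (f v2) (SY v2) (SZ (F v2)) (iY v2 e)" using C by (elim conjE) assumption
  have mY: "marked_tree VY EY Y" using TY unfolding tree_of_spheres_def by (elim conjE) assumption
  have mZ: "marked_tree VZ EZ Z" using TZ unfolding tree_of_spheres_def by (elim conjE) assumption
  have tY: "is_tree VY EY" and lY: "leaves VY EY = Y" using mY unfolding marked_tree_def by auto
  have tZ: "is_tree VZ EZ" and lZ: "leaves VZ EZ = Z" using mZ unfolding marked_tree_def by auto
  have finVY: "finite VY" using tY unfolding is_tree_def by blast
  have EYV: "\<forall>e\<in>EY. e \<subseteq> VY \<and> card e = 2" using tY unfolding is_tree_def by (elim conjE) assumption
  have EZV: "\<forall>e\<in>EZ. e \<subseteq> VZ \<and> card e = 2" using tZ unfolding is_tree_def by (elim conjE) assumption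
  have finEY: "finite EY"
  proof -
    have "EY \<subseteq> Pow VY" using EYV by blast
    then show ?thesis using finVY finite_subset by blast
  qed
  have edge2: "\<exists>a b. e' = {a, b} \<and> a \<noteq> b" if "e' \<in> EY" for e'
    using EYV that card_2_iff by blast
  have Fne: "F a \<noteq> F b" if e': "e' \<in> EY" and ab: "a \<in> e'" "b \<in> e'" "a \<noteq> b" for e' a b
  proof
    assume Fab: "F a = F b"
    obtain x y where xy: "e' = {x, y}" "x \<noteq> y" using edge2[OF e'] by blast
    have "e' = {a, b}" using two_elem_eq[OF xy(1) ab] .
    then have "F ` e' = {F a}" using Fab by auto
    moreover have "card (F ` e') = 2" using EZV FE e' by blast
    ultimately show False by simp
  qed
  have edeg: "edge_degree VY EY SY iY SZ F f e' = local_degree (f u) (SY u) (SZ (F u)) (iY u e')"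
    if e': "e' \<in> EY" and u: "u \<in> e'" "u \<in> internal_vertices VY EY" for e' u
  proof -
    define v0 where "v0 = (SOME v. v \<in> e' \<and> v \<in> internal_vertices VY EY)"
    have v0: "v0 \<in> e' \<and> v0 \<in> internal_vertices VY EY"
      unfolding v0_def using u by (intro someI[where P = "\<lambda>v. v \<in> e' \<and> v \<in> internal_vertices VY EY" and x = u] conjI)
    have "local_degree (f v0) (SY v0) (SZ (F v0)) (iY v0 e') = local_degree (f u) (SY u) (SZ (F u)) (iY u e')"
    proof (cases "v0 = u")
      case True then show ?thesis by simp
    next
      case False
      obtain x y where xy: "e' = {x, y}" "x \<noteq> y" using edge2[OF e'] by blast
      have "e' = {v0, u}" using two_elem_eq[OF xy(1)] v0 u(1) False by blast
      then show ?thesis using cc e' v0 u(2) by blast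
    qed
    then show ?thesis unfolding edge_degree_def Let_def v0_def[symmetric] .
  qed
  have ev: "v \<in> e" and eEZ: "e \<in> EZ" using eV unfolding edges_at_def by auto
  have endp: "\<exists>a\<in>e'. F a = v \<and> a \<in> VY" if e': "e' \<in> EY" "F ` e' = e" for e'
  proof -
    have "v \<in> F ` e'" using e'(2) ev by simp
    then obtain a where "a \<in> e'" "F a = v" by blast
    moreover have "a \<in> VY" using EYV e'(1) \<open>a \<in> e'\<close> by blast
    ultimately show ?thesis by blast
  qed
  show ?thesis
  proof (cases "v \<in> internal_vertices VZ EZ")
    case True
    have VVint: "v' \<in> internal_vertices VY EY" if v': "v' \<in> VY" "F v' = v" for v'
    proof (rule ccontr)
      assume "v' \<notin> internal_vertices VY EY"
      then have "v' \<in> Y" using v' lY unfolding internal_vertices_def by blast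
      then have "v \<in> Z" using FY v' by blast
      then show False using True lZ unfolding internal_vertices_def by blast
    qed
    define EEv where "EEv v' = {e'\<in>edges_at EY v'. F ` e' = e}" for v'
    let ?VV = "{v'\<in>VY. F v' = v}"
    have Ueq: "{e'\<in>EY. F ` e' = e} = (\<Union>(EEv ` ?VV))"
    proof
      show "{e'\<in>EY. F ` e' = e} \<subseteq> \<Union>(EEv ` ?VV)"
      proof
        fix e' assume "e' \<in> {e'\<in>EY. F ` e' = e}"
        then have e': "e' \<in> EY" "F ` e' = e" by auto
        obtain a where a: "a \<in> e'" "F a = v" "a \<in> VY" using endp[OF e'] by blast
        have "e' \<in> EEv a" unfolding EEv_def edges_at_def using e' a by simp
        moreover have "a \<in> ?VV" using a by simp
        ultimately show "e' \<in> \<Union>(EEv ` ?VV)" by blast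
      qed
      show "\<Union>(EEv ` ?VV) \<subseteq> {e'\<in>EY. F ` e' = e}" unfolding EEv_def edges_at_def by auto
    qed
    have finVV: "finite ?VV" using finVY by simp
    have finEEv: "\<forall>i\<in>?VV. finite (EEv i)"
    proof
      fix i show "finite (EEv i)" unfolding EEv_def edges_at_def using finEY by simp
    qed
    have disj: "\<forall>i\<in>?VV. \<forall>j\<in>?VV. i \<noteq> j \<longrightarrow> EEv i \<inter> EEv j = {}"
    proof (intro ballI impI)
      fix i j assume i: "i \<in> ?VV" and j: "j \<in> ?VV" and ij: "i \<noteq> j"
      show "EEv i \<inter> EEv j = {}"
      proof (rule ccontr)
        assume "EEv i \<inter> EEv j \<noteq> {}"
        then obtain e' where "e' \<in> EEv i" "e' \<in> EEv j" by blast
        then have "e' \<in> EY" "i \<in> e'" "j \<in> e'" unfolding EEv_def edges_at_def by auto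
        then have "F i \<noteq> F j" using Fne ij by blast
        then show False using i j by simp
      qed
    qed
    have "(\<Sum>e'\<in>{e'\<in>EY. F ` e' = e}. edge_degree VY EY SY iY SZ F f e')
        = (\<Sum>v'\<in>?VV. \<Sum>e'\<in>EEv v'. edge_degree VY EY SY iY SZ F f e')"
      unfolding Ueq using sum.UNION_disjoint[OF finVV finEEv disj] .
    also have "\<dots> = (\<Sum>v'\<in>?VV. vertex_degree VY EY SY iY SZ F f v')"
    proof (rule sum.cong[OF refl])
      fix v' assume "v' \<in> ?VV"
      then have v': "v' \<in> VY" "F v' = v" by auto
      have vi: "v' \<in> internal_vertices VY EY" using VVint[OF v'] .
      have eF: "e \<in> edges_at EZ (F v')" using eV v'(2) by simp
      have "(\<Sum>e'\<in>EEv v'. edge_degree VY EY SY iY SZ F f e')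
          = (\<Sum>e'\<in>EEv v'. local_degree (f v') (SY v') (SZ (F v')) (iY v' e'))"
      proof (rule sum.cong[OF refl])
        fix e' assume "e' \<in> EEv v'"
        then have "e' \<in> EY" "v' \<in> e'" unfolding EEv_def edges_at_def by auto
        then show "edge_degree VY EY SY iY SZ F f e' = local_degree (f v') (SY v') (SZ (F v')) (iY v' e')"
          using edeg vi by blast
      qed
      also have "\<dots> = bc_degree (f v') (SY v') (SZ (F v'))"
        unfolding EEv_def using vertex_sum[OF cov vi eF] .
      also have "\<dots> = vertex_degree VY EY SY iY SZ F f v'"
        unfolding vertex_degree_def using vi by simp
      finally show "(\<Sum>e'\<in>EEv v'. edge_degree VY EY SY iY SZ F f e') = vertex_degree VY EY SY iY SZ F f v'" .
    qed
    finally show ?thesis .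
  next
    case False
    then have "v \<in> leaves VZ EZ" using vV unfolding internal_vertices_def by simp
    then have "card (edges_at EZ v) = 1" unfolding leaves_def valence_def by simp
    then obtain e0 where "edges_at EZ v = {e0}" by (rule card_1_singletonE)
    then have Ev: "edges_at EZ v = {e}" using eV by simp
    let ?VV = "{v'\<in>VY. F v' = v}"
    let ?EE = "{e'\<in>EY. F ` e' = e}"
    have leafY: "v' \<in> leaves VY EY" if v': "v' \<in> VY" "F v' = v" for v'
    proof (rule ccontr)
      assume "v' \<notin> leaves VY EY"
      then have "v' \<in> internal_vertices VY EY" using v' unfolding internal_vertices_def by simp
      then have "v \<in> internal_vertices VZ EZ" using Fint v' by blast
      then show False using False by simp
    qed
    have "\<forall>v'\<in>?VV. \<exists>g. edges_at EY v' = {g}"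
    proof
      fix v' assume "v' \<in> ?VV"
      then have "v' \<in> leaves VY EY" using leafY by simp
      then have "card (edges_at EY v') = 1" unfolding leaves_def valence_def by simp
      then show "\<exists>g. edges_at EY v' = {g}" by (rule card_1_singletonE) blast
    qed
    from bchoice[OF this] obtain g where g: "\<forall>v'\<in>?VV. edges_at EY v' = {g v'}"
      by (elim exE) (rule that)
    have gE: "g v' \<in> EY" "v' \<in> g v'" if "v' \<in> ?VV" for v'
    proof -
      have "g v' \<in> edges_at EY v'" using g that by simp
      then show "g v' \<in> EY" "v' \<in> g v'" unfolding edges_at_def by simp_all
    qed
    have gF: "F ` g v' = e" if v': "v' \<in> ?VV" for v'
    proof -
      have "F ` g v' \<in> EZ" using FE gE[OF v'] by blast
      moreover have "v \<in> F ` g v'" using gE(2)[OF v'] v' by force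
      ultimately have "F ` g v' \<in> edges_at EZ v" unfolding edges_at_def by simp
      then show ?thesis using Ev by simp
    qed
    have inj: "inj_on g ?VV"
    proof (rule inj_onI)
      fix a b assume a: "a \<in> ?VV" and b: "b \<in> ?VV" and gab: "g a = g b"
      show "a = b"
      proof (rule ccontr)
        assume "a \<noteq> b"
        have "a \<in> g a" "b \<in> g a" "g a \<in> EY" using gE[OF a] gE[OF b] gab by auto
        then have "F a \<noteq> F b" using Fne[of "g a" a b] \<open>a \<noteq> b\<close> by simp
        then show False using a b by simp
      qed
    qed
    have img: "g ` ?VV = ?EE"
    proof
      show "g ` ?VV \<subseteq> ?EE"
      proof
        fix x assume "x \<in> g ` ?VV"
        then obtain v' where v': "v' \<in> ?VV" "x = g v'" by blast
        then show "x \<in> ?EE" using gE(1)[OF v'(1)] gF[OF v'(1)] by simp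
      qed
      show "?EE \<subseteq> g ` ?VV"
      proof
        fix e' assume "e' \<in> ?EE"
        then have e': "e' \<in> EY" "F ` e' = e" by auto
        obtain a where a: "a \<in> e'" "F a = v" "a \<in> VY" using endp[OF e'] by blast
        have aV: "a \<in> ?VV" using a by simp
        have "e' \<in> edges_at EY a" unfolding edges_at_def using e' a by simp
        then have "e' = g a" using g aV by simp
        then show "e' \<in> g ` ?VV" using aV by blast
      qed
    qed
    have vd: "vertex_degree VY EY SY iY SZ F f v' = edge_degree VY EY SY iY SZ F f (g v')" if v': "v' \<in> ?VV" for v'
    proof -
      have "v' \<in> leaves VY EY" using leafY v' by simp
      then have "v' \<notin> internal_vertices VY EY" unfolding internal_vertices_def by simp
      moreover have "(THE e. e \<in> edges_at EY v') = g v'" using g v' by simp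
      ultimately show ?thesis unfolding vertex_degree_def by simp
    qed
    have "(\<Sum>e'\<in>?EE. edge_degree VY EY SY iY SZ F f e') = (\<Sum>e'\<in>g ` ?VV. edge_degree VY EY SY iY SZ F f e')"
      using img by simp
    also have "\<dots> = (\<Sum>v'\<in>?VV. edge_degree VY EY SY iY SZ F f (g v'))"
      using sum.reindex[OF inj, of "edge_degree VY EY SY iY SZ F f"] by (simp add: comp_def)
    also have "\<dots> = (\<Sum>v'\<in>?VV. vertex_degree VY EY SY iY SZ F f v')"
      using vd by simp
    finally show ?thesis .
  qed
qed

end
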